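(* Let $U$ be a semiunitary space of dimension $n$ whose scalar product has rank $m$, and let $\mathcal A:U\to U$ be a linear operator. The following are equivalent: (a) $\mathcal A$ is bounded, i.e. there exists a positive $c\in\mathbb R$ with $\|\mathcal Au\|\le c\|u\|$ for all $u\in U$; (b) the subspace $U_0=\{u\in U : \langle u,u\rangle=0\}$ is invariant under $\mathcal A$; (c) the matrix of $\mathcal A$ in each $m$-orthonormal basis has the lower block triangular form $\begin{bmatrix}B&0\\C&D\end{bmatrix}$ with $B$ of size $m\times m$.
   Context: A semiunitary space is a finite-dimensional complex vector space $U$ with a positive semidefinite Hermitian form $\langle\cdot,\cdot\rangle$ (semilinear in the first argument, linear in the second). The length of $u$ is $\|u\|=\sqrt{\langle u,u\rangle}$. A basis $e_1,\dots,e_n$ of $U$ is $m$-orthonormal if the Gram matrix $[\langle e_i,e_j\rangle]$ equals $\begin{bmatrix}I_m&0\\0&0\end{bmatrix}$. The matrix of an operator in a basis has as its $j$-th column the coordinate vector of the image of the $j$-th basis vector. *)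

theory Defs
  imports "HOL-Analysis.Analysis"
begin

text \<open>A semiunitary space of dimension n is modelled (up to isomorphism) as
  complex^'n with n = CARD('n), together with a positive semidefinite Hermitian
  form f, semilinear in the first argument and linear in the second.\<close>

definition semiunitary_form :: "(complex^'n \<Rightarrow> complex^'n \<Rightarrow> complex) \<Rightarrow> bool" where
  "semiunitary_form f \<longleftrightarrow>
     (\<forall>u v w. f u (v + w) = f u v + f u w) \<and>
     (\<forall>c u v. f u (c *s v) = c * f u v) \<and>
     (\<forall>u v. f u v = cnj (f v u)) \<and>
     (\<forall>u. Im (f u u) = 0 \<and> 0 \<le> Re (f u u))"

definition form_norm :: "(complex^'n \<Rightarrow> complex^'n \<Rightarrow> complex) \<Rightarrow> complex^'n \<Rightarrow> real" where
  "form_norm f u = sqrt (Re (f u u))"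

definition form_rank :: "(complex^'n \<Rightarrow> complex^'n \<Rightarrow> complex) \<Rightarrow> nat" where
  "form_rank f = rank (\<chi> i j. f (axis i 1) (axis j 1) :: complex^'n^'n)"

definition is_ordered_basis :: "(nat \<Rightarrow> complex^'n) \<Rightarrow> bool" where
  "is_ordered_basis e \<longleftrightarrow>
     inj_on e {..<CARD('n)} \<and> vec.independent (e ` {..<CARD('n)}) \<and>
     vec.span (e ` {..<CARD('n)}) = UNIV"

definition m_orthonormal_basis ::
  "(complex^'n \<Rightarrow> complex^'n \<Rightarrow> complex) \<Rightarrow> nat \<Rightarrow> (nat \<Rightarrow> complex^'n) \<Rightarrow> bool" where
  "m_orthonormal_basis f m e \<longleftrightarrow> is_ordered_basis e \<and>
     (\<forall>i<CARD('n). \<forall>j<CARD('n). f (e i) (e j) = (if i = j \<and> i < m then 1 else 0))"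

definition matrix_entry ::
  "(nat \<Rightarrow> complex^'n) \<Rightarrow> (complex^'n \<Rightarrow> complex^'n) \<Rightarrow> nat \<Rightarrow> nat \<Rightarrow> complex" where
  "matrix_entry e A i j = vec.representation (e ` {..<CARD('n)}) (A (e j)) (e i)"

end

theory Submission
  imports Defs
begin

lemma indep_family:
  fixes e :: "nat \<Rightarrow> 'a::field^'n"
  assumes "finite I" "inj_on e I" "\<And>g. (\<Sum>i\<in>I. g i *s e i) = 0 \<Longrightarrow> \<forall>i\<in>I. g i = 0"
  shows "vec.independent (e ` I)"
proof (rule vec.independent_if_scalars_zero)
  show "finite (e`I)" using assms by simp
  fix h x assume h: "(\<Sum>x\<in>e`I. h x *s x) = 0" and x: "x \<in> e`I"
  then obtain i where i: "i \<in> I" "x = e i" by auto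
  have "(\<Sum>i\<in>I. h (e i) *s e i) = 0" using h sum.reindex[OF assms(2), of "\<lambda>x. h x *s x"] by simp
  then have "\<forall>i\<in>I. h (e i) = 0" by (rule assms(3))
  thus "h x = 0" using i by auto
qed

lemma basis_expand:
  fixes e :: "nat \<Rightarrow> complex^'n"
  assumes "is_ordered_basis e"
  shows "u = (\<Sum>i<CARD('n). vec.representation (e`{..<CARD('n)}) u (e i) *s e i)"
proof -
  let ?B = "e`{..<CARD('n)}"
  have "(\<Sum>b\<in>?B. vec.representation ?B u b *s b) = u"
    using assms by (intro vec.sum_representation_eq) (auto simp: is_ordered_basis_def)
  then show ?thesis using assms
    by (simp add: is_ordered_basis_def sum.reindex)
qed

locale sform =
  fixes f :: "complex^'n \<Rightarrow> complex^'n \<Rightarrow> complex"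
  assumes sf: "semiunitary_form f"
begin

lemma add2: "f u (v + w) = f u v + f u w" using sf unfolding semiunitary_form_def by blast
lemma smult2: "f u (c *s v) = c * f u v" using sf unfolding semiunitary_form_def by blast
lemma herm: "f u v = cnj (f v u)" using sf unfolding semiunitary_form_def by blast
lemma im0: "Im (f u u) = 0" using sf unfolding semiunitary_form_def by blast
lemma re_nn: "0 \<le> Re (f u u)" using sf unfolding semiunitary_form_def by blast
lemma add1: "f (u + v) w = f u w + f v w"
  by (subst (1 2 3) herm) (simp add: add2)
lemma smult1: "f (c *s u) v = cnj c * f u v"
  by (subst (1 2) herm) (simp add: smult2)
lemma zero2[simp]: "f u 0 = 0"
proof -
  have "f u (0 + 0) = f u 0 + f u 0" by (rule add2)
  then show ?thesis by simp
qed
lemma zero1[simp]: "f 0 u = 0"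
  by (subst herm) simp
lemma neg2: "f u (- v) = - f u v"
proof -
  have "f u (v + - v) = f u v + f u (- v)" by (rule add2)
  then show ?thesis by (simp add: eq_neg_iff_add_eq_0 add.commute)
qed
lemma diff2: "f u (v - w) = f u v - f u w"
  by (simp only: diff_conv_add_uminus add2 neg2)
lemma neg1: "f (- u) v = - f u v"
  by (subst (1 2) herm) (simp add: neg2)
lemma diff1: "f (u - v) w = f u w - f v w"
  by (simp only: diff_conv_add_uminus add1 neg1)
lemma sum2: "f u (\<Sum>i\<in>I. g i) = (\<Sum>i\<in>I. f u (g i))"
  by (induction I rule: infinite_finite_induct) (auto simp: add2)
lemma sum1: "f (\<Sum>i\<in>I. g i) u = (\<Sum>i\<in>I. f (g i) u)"
  by (induction I rule: infinite_finite_induct) (auto simp: add1)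
lemma real_diag: "f u u = complex_of_real (Re (f u u))"
  using im0[of u] by (simp add: complex_eq_iff)

lemma radical_re:
  assumes "f u u = 0" shows "Re (f v u) = 0"
proof (rule ccontr)
  assume a: "Re (f v u) \<noteq> 0"
  define a where "a = Re (f v u)"
  define b where "b = Re (f v v)"
  define t where "t = - (b + 1) / (2 * a)"
  have "f (v + complex_of_real t *s u) (v + complex_of_real t *s u)
      = f v v + complex_of_real t * f v u + complex_of_real t * f u v + complex_of_real t * complex_of_real t * f u u"
    by (simp add: add1 add2 smult1 smult2 algebra_simps)
  also have "\<dots> = f v v + complex_of_real t * f v u + complex_of_real t * cnj (f v u)"
    using assms herm[of u v] by simp
  finally have "Re (f (v + complex_of_real t *s u) (v + complex_of_real t *s u)) = b + 2 * t * a"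
    by (simp add: a_def b_def)
  also have "\<dots> = -1" using a by (simp add: t_def a_def field_simps)
  finally show False using re_nn by (metis neg_0_le_iff_le not_one_le_zero)
qed

lemma radical2:
  assumes "f u u = 0" shows "f v u = 0"
proof -
  have u2: "f (\<i> *s u) (\<i> *s u) = 0" using assms by (simp add: smult1 smult2)
  have "Re (f v (\<i> *s u)) = 0" by (rule radical_re[OF u2])
  then have "Im (f v u) = 0" by (simp add: smult2)
  moreover have "Re (f v u) = 0" by (rule radical_re[OF assms])
  ultimately show ?thesis by (simp add: complex_eq_iff)
qed

lemma radical1:
  assumes "f u u = 0" shows "f u v = 0"
  using radical2[OF assms, of v] herm[of u v] by simp

definition orth :: "nat \<Rightarrow> (nat \<Rightarrow> complex^'n) \<Rightarrow> bool" where
  "orth k e \<longleftrightarrow> (\<forall>i<k. \<forall>j<k. f (e i) (e j) = (if i = j then 1 else 0))"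

lemma orth_coeff:
  assumes "orth k e" "l < k"
  shows "f (e l) (\<Sum>i<k. g i *s e i) = g l"
proof -
  have "f (e l) (\<Sum>i<k. g i *s e i) = (\<Sum>i<k. g i * (if l = i then 1 else 0))"
    using assms by (intro trans[OF sum2] sum.cong) (auto simp: smult2 orth_def)
  also have "\<dots> = g l" using assms(2) by (simp add: if_distrib sum.delta cong: if_cong)
  finally show ?thesis .
qed

lemma orth_inj: assumes "orth k e" shows "inj_on e {..<k}"
proof (rule inj_onI)
  fix i j assume "i \<in> {..<k}" "j \<in> {..<k}" "e i = e j"
  then show "i = j" using assms unfolding orth_def
    by (metis lessThan_iff one_neq_zero)
qed

lemma orth_indep: assumes "orth k e" shows "vec.independent (e`{..<k})"
proof (rule indep_family)
  show "inj_on e {..<k}" by (rule orth_inj[OF assms])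
  fix g assume "(\<Sum>i\<in>{..<k}. g i *s e i) = 0"
  then show "\<forall>i\<in>{..<k}. g i = 0" using orth_coeff[OF assms, of _ g] by auto
qed simp

lemma orth_le: assumes "orth k e" shows "k \<le> CARD('n)"
proof -
  have "card (e`{..<k}) = k" using orth_inj[OF assms] by (simp add: card_image)
  moreover have "card (e`{..<k}) \<le> vec.dim (e`{..<k})"
    using vec.independent_bound_general[OF orth_indep[OF assms]] by simp
  moreover have "vec.dim (e`{..<k}) \<le> vec.dim (UNIV :: (complex^'n) set)"
    by (rule vec.dim_subset) simp
  moreover have "vec.dim (UNIV :: (complex^'n) set) = CARD('n)" by (rule vec_dim_card)
  ultimately show ?thesis by linarith
qed

lemma orth_step:
  assumes o: "orth k e" and w: "w = v - (\<Sum>i<k. f (e i) v *s e i)" and nz: "f w w \<noteq> 0"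
  shows "orth (Suc k) (e(k := complex_of_real (1 / sqrt (Re (f w w))) *s w))"
proof -
  define r where "r = Re (f w w)"
  have r: "r > 0"
  proof -
    have "r \<noteq> 0" using nz real_diag[of w] unfolding r_def by auto
    then show ?thesis using re_nn[of w] unfolding r_def by linarith
  qed
  have fw: "f w w = complex_of_real r" using real_diag[of w] by (simp add: r_def)
  have ew: "f (e i) w = 0" if "i < k" for i
    using orth_coeff[OF o that, of "\<lambda>j. f (e j) v"] by (simp add: w diff2)
  have we: "f w (e i) = 0" if "i < k" for i
    using ew[OF that] herm[of w "e i"] by simp
  define c where "c = complex_of_real (1 / sqrt r)"
  have cc: "cnj c * c * complex_of_real r = 1"
    using r by (simp add: c_def field_simps flip: of_real_mult)
  have nn: "f (c *s w) (c *s w) = 1" using cc fw by (simp add: smult1 smult2 mult.assoc mult.left_commute)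
  show ?thesis unfolding orth_def
  proof (intro allI impI)
    fix i j assume i: "i < Suc k" and j: "j < Suc k"
    show "f ((e(k := complex_of_real (1 / sqrt (Re (f w w))) *s w)) i)
            ((e(k := complex_of_real (1 / sqrt (Re (f w w))) *s w)) j) = (if i = j then 1 else 0)"
      using i j o nn ew we unfolding c_def r_def orth_def
      by (cases "i = k"; cases "j = k") (auto simp: smult1 smult2)
  qed
qed

lemma orth_max:
  "\<exists>k e. orth k e \<and> (\<forall>v. f (v - (\<Sum>i<k. f (e i) v *s e i)) (v - (\<Sum>i<k. f (e i) v *s e i)) = 0)"
proof -
  let ?P = "\<lambda>k. \<exists>e. orth k e"
  have P0: "?P 0" by (auto simp: orth_def)
  have bd: "\<forall>y. ?P y \<longrightarrow> y \<le> CARD('n)" using orth_le by blast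
  define K where "K = (GREATEST k. ?P k)"
  have "?P K" unfolding K_def using GreatestI_nat[of ?P 0 "CARD('n)"] P0 bd by blast
  then obtain e where e: "orth K e" by blast
  show ?thesis
  proof (intro exI conjI allI)
    show "orth K e" by fact
    fix v
    show "f (v - (\<Sum>i<K. f (e i) v *s e i)) (v - (\<Sum>i<K. f (e i) v *s e i)) = 0"
    proof (rule ccontr)
      assume "\<not> ?thesis"
      then have "?P (Suc K)" using orth_step[OF e refl] by blast
      then have "Suc K \<le> K" using Greatest_le_nat[of ?P "Suc K" "CARD('n)"] bd unfolding K_def by blast
      then show False by simp
    qed
  qed
qed

lemma subspace_N: "vec.subspace {u. f u u = 0}"
  unfolding vec.subspace_def
proof (intro conjI ballI allI)
  fix x y assume x: "x \<in> {u. f u u = 0}" and y: "y \<in> {u. f u u = 0}"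
  then have xx: "f x x = 0" and yy: "f y y = 0" by auto
  have "f x y = 0" "f y x = 0" using radical1[OF xx] radical1[OF yy] by auto
  then show "x + y \<in> {u. f u u = 0}"
    using xx yy by (simp add: add1 add2)
next
  fix c x assume "x \<in> {u. f u u = 0}"
  then show "c *s x \<in> {u. f u u = 0}" by (simp add: smult1 smult2)
qed simp

lemma exists_mob: "\<exists>k e. k \<le> CARD('n) \<and> m_orthonormal_basis f k e"
proof -
  from orth_max obtain k e where o: "orth k e"
    and pr0: "\<forall>v. f (v - (\<Sum>i<k. f (e i) v *s e i)) (v - (\<Sum>i<k. f (e i) v *s e i)) = 0"
    by (elim exE conjE)
  note pr = pr0[rule_format]
  obtain B where B: "B \<subseteq> {u. f u u = 0}" "vec.independent B" "{u. f u u = 0} \<subseteq> vec.span B"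
    and "card B = vec.dim {u. f u u = 0}"
    by (rule vec.basis_exists)
  have finB: "finite B" using B(2) by (rule vec.finiteI_independent)
  define d where "d = card B"
  obtain b where bb: "bij_betw b {..<d} B"
    using ex_bij_betw_nat_finite[OF finB] unfolding d_def by (auto simp: lessThan_atLeast0)
  define E where "E i = (if i < k then e i else b (i - k))" for i
  define I where "I = {..<k+d}"
  have bN: "f (b j) (b j) = 0" if "j < d" for j
    using bb B(1) that unfolding bij_betw_def by auto
  have EN: "f (E i) (E i) = 0" if "k \<le> i" "i < k + d" for i
    using bN[of "i - k"] that unfolding E_def by auto
  have gram: "f (E i) (E j) = (if i = j \<and> i < k then 1 else 0)" if "i < k + d" "j < k + d" for i j
  proof (cases "i < k \<and> j < k")
    case True then show ?thesis using o unfolding orth_def E_def by auto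
  next
    case False
    then have "k \<le> i \<or> k \<le> j" by auto
    then have "f (E i) (E j) = 0" using EN that radical1 radical2 by blast
    then show ?thesis using False by auto
  qed
  have injE: "inj_on E I"
  proof (rule inj_onI)
    fix i j assume i: "i \<in> I" and j: "j \<in> I" and eq: "E i = E j"
    show "i = j"
    proof (cases "i < k"; cases "j < k")
      assume "i < k" "j < k" then show ?thesis using eq orth_inj[OF o] unfolding E_def inj_on_def by auto
    next
      assume "\<not> i < k" "\<not> j < k"
      then have "b (i - k) = b (j - k)" using eq unfolding E_def by auto
      moreover have "i - k \<in> {..<d}" "j - k \<in> {..<d}" using i j \<open>\<not> i < k\<close> \<open>\<not> j < k\<close> unfolding I_def by auto
      ultimately have "i - k = j - k" using bb unfolding bij_betw_def inj_on_def by blast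
      then show ?thesis using \<open>\<not> i < k\<close> \<open>\<not> j < k\<close> by auto
    next
      assume "i < k" "\<not> j < k"
      then show ?thesis using gram[of i i] gram[of j j] eq i j unfolding I_def by auto
    next
      assume "\<not> i < k" "j < k"
      then show ?thesis using gram[of i i] gram[of j j] eq i j unfolding I_def by auto
    qed
  qed
  have indE: "vec.independent (E ` I)"
  proof (rule indep_family)
    show "finite I" by (simp add: I_def)
    show "inj_on E I" by (rule injE)
    fix g assume g: "(\<Sum>i\<in>I. g i *s E i) = 0"
    have g1: "g l = 0" if l: "l < k" for l
    proof -
      have "f (E l) (\<Sum>i\<in>I. g i *s E i) = (\<Sum>i\<in>I. g i * (if l = i then 1 else 0))"
        using l gram[of l] unfolding I_def
        by (intro trans[OF sum2] sum.cong) (auto simp: smult2)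
      also have "\<dots> = g l" using l by (simp add: I_def if_distrib sum.delta cong: if_cong)
      finally show ?thesis using g by simp
    qed
    have splitI: "I = {..<k} \<union> {k..<k+d}" unfolding I_def by auto
    have "(\<Sum>i\<in>I. g i *s E i) = (\<Sum>i\<in>{..<k}. g i *s E i) + (\<Sum>i\<in>{k..<k+d}. g i *s E i)"
      unfolding splitI by (rule sum.union_disjoint) auto
    also have "(\<Sum>i\<in>{..<k}. g i *s E i) = 0" using g1 by simp
    also have "(\<Sum>i\<in>{k..<k+d}. g i *s E i) = (\<Sum>j\<in>{..<d}. g (j + k) *s b j)"
    proof -
      have "(\<Sum>i\<in>{k..<k+d}. g i *s E i) = (\<Sum>j\<in>{0..<d}. g (j + k) *s E (j + k))"
        by (subst sum.shift_bounds_nat_ivl[symmetric]) (simp add: add.commute)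
      also have "\<dots> = (\<Sum>j\<in>{..<d}. g (j + k) *s b j)"
        by (intro sum.cong) (auto simp: E_def lessThan_atLeast0)
      finally show ?thesis .
    qed
    finally have gb: "(\<Sum>j\<in>{..<d}. g (j + k) *s b j) = 0" using g by simp
    define c where "c v = g (inv_into {..<d} b v + k)" for v
    have "(\<Sum>v\<in>B. c v *s v) = (\<Sum>j\<in>{..<d}. c (b j) *s b j)"
      using bb sum.reindex[of b "{..<d}" "\<lambda>v. c v *s v"] by (simp add: bij_betw_def)
    also have "\<dots> = (\<Sum>j\<in>{..<d}. g (j + k) *s b j)"
      using bb by (intro sum.cong) (auto simp: c_def bij_betw_def inv_into_f_f)
    finally have "(\<Sum>v\<in>B. c v *s v) = 0" using gb by simp
    then have c0: "\<forall>v\<in>B. c v = 0" using B(2) vec.independent_explicit by blast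
    have g2: "g i = 0" if "k \<le> i" "i < k + d" for i
    proof -
      have "b (i - k) \<in> B" using bb that unfolding bij_betw_def by auto
      then have "c (b (i - k)) = 0" using c0 by blast
      moreover have "inv_into {..<d} b (b (i - k)) = i - k"
        using bb that unfolding bij_betw_def by (auto intro: inv_into_f_f)
      ultimately show ?thesis using that by (simp add: c_def)
    qed
    show "\<forall>i\<in>I. g i = 0" using g1 g2 unfolding I_def by (metis lessThan_iff not_less)
  qed
  have BE: "B \<subseteq> E ` I"
  proof
    fix v assume "v \<in> B"
    then obtain j where j: "j < d" "v = b j" using bb unfolding bij_betw_def by auto
    then have "E (j + k) = v" by (simp add: E_def)
    moreover have "j + k \<in> I" using j by (simp add: I_def)
    ultimately show "v \<in> E ` I" by blast
  qed
  have spanE: "vec.span (E ` I) = UNIV"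
  proof (intro set_eqI iffI)
    fix v :: "complex^'n"
    define w where "w = v - (\<Sum>i<k. f (e i) v *s e i)"
    have "w \<in> vec.span B" using B(3) pr[of v] unfolding w_def by blast
    then have w: "w \<in> vec.span (E ` I)" using vec.span_mono[OF BE] by blast
    have "(\<Sum>i<k. f (e i) v *s e i) \<in> vec.span (E ` I)"
    proof (rule vec.span_sum)
      fix i assume "i \<in> {..<k}"
      then have "e i \<in> E ` I" unfolding E_def I_def by (auto intro!: image_eqI[of _ _ i])
      then show "f (e i) v *s e i \<in> vec.span (E ` I)" by (intro vec.span_scale vec.span_base)
    qed
    then have "(\<Sum>i<k. f (e i) v *s e i) + w \<in> vec.span (E ` I)" using w by (rule vec.span_add)
    then show "v \<in> vec.span (E ` I)" by (simp add: w_def)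
  qed simp
  have "card (E ` I) = vec.dim (UNIV :: (complex^'n) set)"
    using indE spanE by (intro vec.basis_card_eq_dim) auto
  moreover have "card (E ` I) = k + d" using injE by (simp add: card_image I_def)
  moreover have "vec.dim (UNIV :: (complex^'n) set) = CARD('n)" by (rule vec_dim_card)
  ultimately have cardn: "k + d = CARD('n)" by linarith
  have "m_orthonormal_basis f k E"
    unfolding m_orthonormal_basis_def is_ordered_basis_def
    using injE indE spanE gram cardn unfolding I_def by auto
  then show ?thesis using cardn by (intro exI[of _ k] exI[of _ E]) simp
qed

context
  fixes e :: "nat \<Rightarrow> complex^'n" and m :: nat
  assumes mob: "m_orthonormal_basis f m e" and mle: "m \<le> CARD('n)"
begin

lemma ob: "is_ordered_basis e" using mob by (simp add: m_orthonormal_basis_def)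

lemma gram: "i < CARD('n) \<Longrightarrow> j < CARD('n) \<Longrightarrow> f (e i) (e j) = (if i = j \<and> i < m then 1 else 0)"
  using mob by (simp add: m_orthonormal_basis_def)

abbreviation rep where "rep u i \<equiv> vec.representation (e`{..<CARD('n)}) u (e i)"

lemma expand: "u = (\<Sum>i<CARD('n). rep u i *s e i)"
  by (rule basis_expand[OF ob])

lemma coord: assumes "l < m" shows "f (e l) u = rep u l"
proof -
  have "f (e l) u = f (e l) (\<Sum>i<CARD('n). rep u i *s e i)" by (subst expand) simp
  also have "\<dots> = (\<Sum>i<CARD('n). rep u i * (if l = i then 1 else 0))"
    using assms mle gram[of l] by (intro trans[OF sum2] sum.cong) (auto simp: smult2)
  also have "\<dots> = rep u l" using assms mle by (simp add: if_distrib sum.delta cong: if_cong)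
  finally show ?thesis .
qed

lemma enull: assumes "m \<le> l" "l < CARD('n)" shows "f (e l) (e l) = 0"
  using gram[of l l] assms by simp

lemma fnull: assumes "m \<le> l" "l < CARD('n)" shows "f (e l) u = 0"
  by (rule radical1[OF enull[OF assms]])

lemma fnull2: assumes "m \<le> l" "l < CARD('n)" shows "f u (e l) = 0"
  by (rule radical2[OF enull[OF assms]])

lemma diag: "f u u = (\<Sum>l<m. f (e l) u * cnj (f (e l) u))"
proof -
  have "f u u = f u (\<Sum>i<CARD('n). rep u i *s e i)" by (subst (2) expand) simp
  also have "\<dots> = (\<Sum>i<CARD('n). rep u i * f u (e i))"
    by (intro trans[OF sum2] sum.cong) (auto simp: smult2)
  also have "\<dots> = (\<Sum>l<m. f (e l) u * cnj (f (e l) u))"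
  proof (rule sum.mono_neutral_cong_right)
    show "\<forall>i\<in>{..<CARD('n)} - {..<m}. rep u i * f u (e i) = 0"
    proof
      fix i assume "i \<in> {..<CARD('n)} - {..<m}"
      then have "f u (e i) = 0" by (intro fnull2) auto
      then show "rep u i * f u (e i) = 0" by simp
    qed
    fix x assume "x \<in> {..<m}"
    then have "rep u x = f (e x) u" using coord by auto
    moreover have "f u (e x) = cnj (f (e x) u)" by (rule herm)
    ultimately show "rep u x * f u (e x) = f (e x) u * cnj (f (e x) u)" by simp
  qed (use mle in auto)
  finally show ?thesis .
qed

lemma diag_re: "Re (f u u) = (\<Sum>l<m. (cmod (f (e l) u))\<^sup>2)"
proof -
  have "f u u = (\<Sum>l<m. complex_of_real ((cmod (f (e l) u))\<^sup>2))"
    unfolding diag by (intro sum.cong refl) (simp add: complex_norm_square flip: of_real_power)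
  then show ?thesis by (simp flip: of_real_sum)
qed

lemma null_iff: "f u u = 0 \<longleftrightarrow> (\<forall>l<m. f (e l) u = 0)"
proof -
  have "f u u = 0 \<longleftrightarrow> Re (f u u) = 0" using real_diag[of u] by (metis of_real_0 zero_complex.simps(1))
  also have "\<dots> \<longleftrightarrow> (\<forall>l\<in>{..<m}. (cmod (f (e l) u))\<^sup>2 = 0)"
    unfolding diag_re by (rule sum_nonneg_eq_0_iff) auto
  finally show ?thesis by auto
qed

lemma fnorm: "form_norm f u = L2_set (\<lambda>l. cmod (f (e l) u)) {..<m}"
  by (simp add: form_norm_def L2_set_def diag_re)

end

definition phi :: "complex^'n \<Rightarrow> complex^'n" where
  "phi v = (\<chi> j. f v (axis j 1))"

lemma phi_add: "phi (u + v) = phi u + phi v" by (simp add: phi_def add1 vec_eq_iff)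
lemma phi_scale: "phi (c *s u) = cnj c *s phi u" by (simp add: phi_def smult1 vec_eq_iff)
lemma phi_sum: "phi (\<Sum>i\<in>I. g i) = (\<Sum>i\<in>I. phi (g i))"
  by (induction I rule: infinite_finite_induct) (auto simp: phi_add phi_def vec_eq_iff add1)

lemma phi_zero: assumes "phi w = 0" shows "f w x = 0"
proof -
  have "f w x = f w (\<Sum>j\<in>UNIV. x $ j *s axis j 1)" by (simp add: basis_expansion)
  also have "\<dots> = (\<Sum>j\<in>UNIV. x $ j * f w (axis j 1))" by (simp add: sum2 smult2)
  also have "\<dots> = 0" using assms by (simp add: phi_def vec_eq_iff)
  finally show ?thesis .
qed

lemma phi_eqD: assumes "phi u = phi v" shows "f u x = f v x"
proof -
  have "phi (u - v) = 0"
    using assms phi_add[of "u - v" v] by simp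
  then show ?thesis using phi_zero[of "u - v" x] by (simp add: diff1)
qed

lemma rank_eq:
  assumes mob: "m_orthonormal_basis f m e" and mle: "m \<le> CARD('n)"
  shows "form_rank f = m"
proof -
  define G where "G = (\<chi> i j. f (axis i 1) (axis j 1) :: complex^'n^'n)"
  define S where "S = (\<lambda>i. phi (e i)) ` {..<m}"
  have rowsG: "rows G = range (\<lambda>i. phi (axis i 1))"
    by (auto simp: rows_def row_def G_def phi_def)
  have gr: "f (e i) (e j) = (if i = j \<and> i < m then 1 else 0)" if "i < m" "j < m" for i j
    using gram[OF mob mle, of i j] that mle by simp
  have injS: "inj_on (\<lambda>i. phi (e i)) {..<m}"
  proof (rule inj_onI)
    fix i j assume "i \<in> {..<m}" "j \<in> {..<m}" "phi (e i) = phi (e j)"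
    then show "i = j" using phi_eqD[of "e i" "e j" "e i"] gr[of i i] gr[of j i] by (auto split: if_splits)
  qed
  have indS: "vec.independent S"
    unfolding S_def
  proof (rule indep_family)
    show "inj_on (\<lambda>i. phi (e i)) {..<m}" by (rule injS)
    fix g assume g: "(\<Sum>i\<in>{..<m}. g i *s phi (e i)) = 0"
    define w where "w = (\<Sum>i\<in>{..<m}. cnj (g i) *s e i)"
    have "phi w = 0" using g by (simp add: w_def phi_sum phi_scale)
    show "\<forall>i\<in>{..<m}. g i = 0"
    proof
      fix l assume l: "l \<in> {..<m}"
      have "f w (e l) = (\<Sum>i\<in>{..<m}. g i * (if i = l then 1 else 0))"
        unfolding w_def using l gr by (intro trans[OF sum1] sum.cong) (auto simp: smult1)
      also have "\<dots> = g l" using l by (simp add: if_distrib sum.delta' cong: if_cong)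
      finally show "g l = 0" using phi_zero[OF \<open>phi w = 0\<close>, of "e l"] by simp
    qed
  qed simp
  have phiE: "phi (e l) \<in> vec.span S" if "l < CARD('n)" for l
  proof (cases "l < m")
    case True then show ?thesis unfolding S_def by (intro vec.span_base) auto
  next
    case False
    then have "phi (e l) = 0" using fnull[OF mob mle, of l] that by (simp add: phi_def vec_eq_iff)
    then show ?thesis by (simp add: vec.span_zero)
  qed
  have "vec.span (rows G) = vec.span S"
    unfolding vec.span_eq
  proof
    show "rows G \<subseteq> vec.span S"
    proof
      fix r assume "r \<in> rows G"
      then obtain i where r: "r = phi (axis i 1)" using rowsG by auto
      have "phi (axis i 1) = phi (\<Sum>l<CARD('n). rep e (axis i 1) l *s e l)"
        by (subst expand[OF mob mle]) simp
      also have "\<dots> = (\<Sum>l<CARD('n). cnj (rep e (axis i 1) l) *s phi (e l))"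
        by (simp add: phi_sum phi_scale)
      also have "\<dots> \<in> vec.span S"
        by (intro vec.span_sum vec.span_scale phiE) auto
      finally show "r \<in> vec.span S" using r by simp
    qed
    show "S \<subseteq> vec.span (rows G)"
    proof
      fix r assume "r \<in> S"
      then obtain l where r: "r = phi (e l)" unfolding S_def by auto
      have "phi (e l) = phi (\<Sum>j\<in>UNIV. e l $ j *s axis j 1)" by (simp add: basis_expansion)
      also have "\<dots> = (\<Sum>j\<in>UNIV. cnj (e l $ j) *s phi (axis j 1))"
        by (simp add: phi_sum phi_scale)
      also have "\<dots> \<in> vec.span (rows G)"
        by (intro vec.span_sum vec.span_scale vec.span_base) (auto simp: rowsG)
      finally show "r \<in> vec.span (rows G)" using r by simp
    qed
  qed
  then have "vec.dim (rows G) = vec.dim S" by (metis vec.dim_span)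
  also have "\<dots> = card S" by (rule vec.dim_eq_card_independent[OF indS])
  also have "\<dots> = m" using injS by (simp add: S_def card_image)
  finally show ?thesis by (simp add: form_rank_def G_def row_rank_def_gen)
qed

end

theorem lemma2p1:
  fixes f :: "complex^'n \<Rightarrow> complex^'n \<Rightarrow> complex"
    and A :: "complex^'n \<Rightarrow> complex^'n"
    and m :: nat
  assumes "semiunitary_form f"
    and "form_rank f = m"
    and "Vector_Spaces.linear (*s) (*s) A"
  shows "((\<exists>c::real. c > 0 \<and> (\<forall>u. form_norm f (A u) \<le> c * form_norm f u))
            \<longleftrightarrow> (\<forall>u. f u u = 0 \<longrightarrow> f (A u) (A u) = 0))
       \<and> ((\<forall>u. f u u = 0 \<longrightarrow> f (A u) (A u) = 0)
            \<longleftrightarrow> (\<forall>e. m_orthonormal_basis f m e \<longrightarrow>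
                   (\<forall>i j. i < m \<and> m \<le> j \<and> j < CARD('n) \<longrightarrow> matrix_entry e A i j = 0)))"
proof -
  interpret sform f by (rule sform.intro) (rule assms(1))
  note lin = assms(3)
  obtain k E where kle: "k \<le> CARD('n)" and mobE: "m_orthonormal_basis f k E"
    using exists_mob by blast
  have km: "k = m" using rank_eq[OF mobE kle] assms(2) by simp
  note mobE = mobE[unfolded km] and mle = kle[unfolded km]
  have Aexp: "f (E l) (A u) = (\<Sum>i<CARD('n). rep E u i * f (E l) (A (E i)))" for l u
  proof -
    have "A u = A (\<Sum>i<CARD('n). rep E u i *s E i)" by (subst expand[OF mobE mle]) simp
    also have "\<dots> = (\<Sum>i<CARD('n). rep E u i *s A (E i))"
      by (simp add: vec.linear_sum[OF lin] vec.linear_scale[OF lin])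
    finally show ?thesis by (simp add: sum2 smult2)
  qed
  define Bp where "Bp \<longleftrightarrow> (\<forall>u. f u u = 0 \<longrightarrow> f (A u) (A u) = 0)"
  have ab: "(\<exists>c::real. c > 0 \<and> (\<forall>u. form_norm f (A u) \<le> c * form_norm f u)) \<longleftrightarrow> Bp"
  proof
    assume "\<exists>c::real. c > 0 \<and> (\<forall>u. form_norm f (A u) \<le> c * form_norm f u)"
    then obtain c where c: "\<And>u. form_norm f (A u) \<le> c * form_norm f u" by blast
    show Bp unfolding Bp_def
    proof (intro allI impI)
      fix u assume u: "f u u = 0"
      have "form_norm f (A u) \<le> 0" using c[of u] u by (simp add: form_norm_def)
      then have "Re (f (A u) (A u)) \<le> 0" by (simp add: form_norm_def)
      then have "Re (f (A u) (A u)) = 0" using re_nn[of "A u"] by linarith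
      then show "f (A u) (A u) = 0" using real_diag[of "A u"] by simp
    qed
  next
    assume B: Bp
    define M where "M l i = f (E l) (A (E i))" for l i
    define K where "K = (\<Sum>l<m. \<Sum>i<m. cmod (M l i))"
    have K0: "0 \<le> K" unfolding K_def by (intro sum_nonneg) auto
    show "\<exists>c::real. c > 0 \<and> (\<forall>u. form_norm f (A u) \<le> c * form_norm f u)"
    proof (intro exI conjI allI)
      show "K + 1 > 0" using K0 by simp
      fix u
      define nu where "nu = form_norm f u"
      have nu: "nu = L2_set (\<lambda>l. cmod (f (E l) u)) {..<m}" unfolding nu_def by (rule fnorm[OF mobE mle])
      have nu0: "0 \<le> nu" unfolding nu by (rule L2_set_nonneg)
      have pl: "cmod (f (E l) (A u)) \<le> nu * (\<Sum>i<m. cmod (M l i))" if l: "l < m" for l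
      proof -
        have "(\<Sum>i<CARD('n). rep E u i * f (E l) (A (E i))) = (\<Sum>i<m. f (E i) u * M l i)"
        proof (rule sum.mono_neutral_cong_right)
          show "\<forall>i\<in>{..<CARD('n)} - {..<m}. rep E u i * f (E l) (A (E i)) = 0"
          proof
            fix i assume i: "i \<in> {..<CARD('n)} - {..<m}"
            then have "f (E i) (E i) = 0" by (intro enull[OF mobE mle]) auto
            then have "f (A (E i)) (A (E i)) = 0" using B unfolding Bp_def by blast
            then have "f (E l) (A (E i)) = 0" by (rule radical2)
            then show "rep E u i * f (E l) (A (E i)) = 0" by simp
          qed
          fix i assume "i \<in> {..<m}"
          then show "rep E u i * f (E l) (A (E i)) = f (E i) u * M l i"
            using coord[OF mobE mle, of i u] by (simp add: M_def)
        qed (use mle in auto)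
        then have "f (E l) (A u) = (\<Sum>i<m. f (E i) u * M l i)" using Aexp[of l u] by simp
        also have "cmod \<dots> \<le> (\<Sum>i<m. cmod (f (E i) u * M l i))" by (rule norm_sum)
        also have "\<dots> \<le> (\<Sum>i<m. nu * cmod (M l i))"
        proof (rule sum_mono)
          fix i assume i: "i \<in> {..<m}"
          have "cmod (f (E i) u) \<le> nu" unfolding nu by (rule member_le_L2_set) (use i in auto)
          then show "cmod (f (E i) u * M l i) \<le> nu * cmod (M l i)"
            by (simp add: norm_mult mult_right_mono)
        qed
        finally show ?thesis by (simp add: sum_distrib_left)
      qed
      have "form_norm f (A u) = L2_set (\<lambda>l. cmod (f (E l) (A u))) {..<m}" by (rule fnorm[OF mobE mle])
      also have "\<dots> \<le> (\<Sum>l<m. cmod (f (E l) (A u)))" by (rule L2_set_le_sum) auto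
      also have "\<dots> \<le> (\<Sum>l<m. nu * (\<Sum>i<m. cmod (M l i)))" by (rule sum_mono) (use pl in auto)
      also have "\<dots> = nu * K" by (simp add: K_def sum_distrib_left)
      also have "\<dots> \<le> (K + 1) * nu" using nu0 by (simp add: algebra_simps)
      finally show "form_norm f (A u) \<le> (K + 1) * form_norm f u" by (simp add: nu_def)
    qed
  qed
  have bc: "Bp \<longleftrightarrow> (\<forall>e. m_orthonormal_basis f m e \<longrightarrow>
                   (\<forall>i j. i < m \<and> m \<le> j \<and> j < CARD('n) \<longrightarrow> matrix_entry e A i j = 0))"
  proof
    assume B: Bp
    show "\<forall>e. m_orthonormal_basis f m e \<longrightarrow>
                   (\<forall>i j. i < m \<and> m \<le> j \<and> j < CARD('n) \<longrightarrow> matrix_entry e A i j = 0)"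
    proof (intro allI impI)
      fix e i j assume mob: "m_orthonormal_basis f m e" and ij: "i < m \<and> m \<le> j \<and> j < CARD('n)"
      have "f (e j) (e j) = 0" using ij by (intro enull[OF mob mle]) auto
      then have "f (A (e j)) (A (e j)) = 0" using B unfolding Bp_def by blast
      then have "f (e i) (A (e j)) = 0" by (rule radical2)
      moreover have "f (e i) (A (e j)) = matrix_entry e A i j"
        unfolding matrix_entry_def using ij by (intro coord[OF mob mle]) auto
      ultimately show "matrix_entry e A i j = 0" by simp
    qed
  next
    assume C: "\<forall>e. m_orthonormal_basis f m e \<longrightarrow>
                   (\<forall>i j. i < m \<and> m \<le> j \<and> j < CARD('n) \<longrightarrow> matrix_entry e A i j = 0)"
    show Bp unfolding Bp_def
    proof (intro allI impI)
      fix u assume u: "f u u = 0"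
      then have pu: "\<forall>l<m. f (E l) u = 0" using null_iff[OF mobE mle] by blast
      have "\<forall>l<m. f (E l) (A u) = 0"
      proof (intro allI impI)
        fix l assume l: "l < m"
        have "(\<Sum>i<CARD('n). rep E u i * f (E l) (A (E i))) = 0"
        proof (rule sum.neutral, rule ballI)
          fix i assume i: "i \<in> {..<CARD('n)}"
          show "rep E u i * f (E l) (A (E i)) = 0"
          proof (cases "i < m")
            case True
            then have "rep E u i = 0" using coord[OF mobE mle, of i u] pu by simp
            then show ?thesis by simp
          next
            case False
            have "matrix_entry E A l i = 0" using C mobE l False i by auto
            moreover have "f (E l) (A (E i)) = matrix_entry E A l i"
              unfolding matrix_entry_def using l by (intro coord[OF mobE mle])
            ultimately show ?thesis by simp
          qed
        qed
        then show "f (E l) (A u) = 0" using Aexp[of l u] by simp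
      qed
      then show "f (A u) (A u) = 0" using null_iff[OF mobE mle] by blast
    qed
  qed
  show ?thesis using ab bc by (simp add: Bp_def)
qed

end
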